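(* Let $n,t$ be positive integers and let $\mathcal{B}$ be a partition of $[n]$ into $t$ nonempty blocks. Define the set $\mathcal{R}$ of required pairs as the smallest set of pairs $(\underline{i},\mathcal{B}')$, with $\underline{i}\in[n]$ and $\mathcal{B}'\subseteq\mathcal{B}$, such that: - $(1,\mathcal{B})\in\mathcal{R}$; - whenever $(\underline{i},\mathcal{B}')\in\mathcal{R}$ with $\mathcal{B}'\neq\varnothing$, then $(\omega(\underline{i},\underline{B})+_n1,\ \mathcal{B}'\setminus\{\underline{B}\})\in\mathcal{R}$ for every $\underline{B}\in\mathcal{B}'$. These are exactly the table entries $K[\underline{i},\mathcal{B}']$ that must be computed in order to evaluate $K[1,\mathcal{B}]$ by the recurrence $$K[\underline{i},\mathcal{B}']=\min_{\underline{B}\in\mathcal{B}'}\{\delta(\underline{i},\underline{B})+K[\omega(\underline{i},\underline{B})+_n1,\mathcal{B}'\setminus\{\underline{B}\}]\}.$$ Then for every proper subset $\mathcal{B}'\subsetneq\mathcal{B}$ and every $\underline{i}\in\bigcup_{B\in\mathcal{B}'}B$, the pair $(\underline{i}+_n1,\mathcal{B}')$ does not belong to $\mathcal{R}$. In other words, the entry $K[\underline{i}+_n1,\mathcal{B}']$ is not required to be computed.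
   Context: Each block $B\in\mathcal{B}$ is written as an increasing sequence $\langle i_1<\cdots<i_\ell\rangle$ of its elements. For $\underline{i}\in[n]$: - If $\underline{i}\le i_1$ or $i_\ell<\underline{i}$, then $\omega(\underline{i},B)=i_\ell$. - Otherwise $i_l<\underline{i}\le i_{l+1}$ for a unique $l\in[\ell-1]$, and $\omega(\underline{i},B)=i_l$. $\delta(\underline{i},B)=0$ if $\underline{i}\le i_1$ and $i_\ell<n$, and $\delta(\underline{i},B)=1$ otherwise. $a+_n1$ denotes $a+1$ for $a<n$, and $n+_n1=1$. Here $K[\underline{i},\mathcal{B}']$ is the dynamic programming table of the Train Marshalling Problem. Its entry is the minimum number of segments of $A(n)$ (the infinite concatenation of copies of $\langle1,\ldots,n\rangle$) needed to place the blocks of $\mathcal{B}'$ so that the blocks do not interleave and no element is placed before position $\underline{i}$ of the first segment. *)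

theory Defs
  imports Main
begin

definition add1_mod :: "nat \<Rightarrow> nat \<Rightarrow> nat" where
  "add1_mod n a = (if a < n then a + 1 else 1)"

definition omega :: "nat \<Rightarrow> nat set \<Rightarrow> nat" where
  "omega i B = (if i \<le> Min B \<or> Max B < i then Max B else Max {x \<in> B. x < i})"

definition delta :: "nat \<Rightarrow> nat \<Rightarrow> nat set \<Rightarrow> nat" where
  "delta n i B = (if i \<le> Min B \<and> Max B < n then 0 else 1)"

definition is_partition :: "nat \<Rightarrow> nat \<Rightarrow> nat set set \<Rightarrow> bool" where
  "is_partition n t \<B> \<longleftrightarrow>
     (\<forall>B\<in>\<B>. B \<noteq> {}) \<and>
     (\<forall>B\<in>\<B>. \<forall>C\<in>\<B>. B \<noteq> C \<longrightarrow> B \<inter> C = {}) \<and>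
     \<Union>\<B> = {1..n} \<and> card \<B> = t"

inductive_set required :: "nat \<Rightarrow> nat set set \<Rightarrow> (nat \<times> nat set set) set"
  for n :: nat and \<B> :: "nat set set" where
  start: "(1, \<B>) \<in> required n \<B>"
| step: "\<lbrakk>(i, \<B>') \<in> required n \<B>; \<B>' \<noteq> {}; B \<in> \<B>'\<rbrakk>
          \<Longrightarrow> (add1_mod n (omega i B), \<B>' - {B}) \<in> required n \<B>"

end

theory Submission
  imports Defs
begin

lemma req_sub: "(j, C) \<in> required n \<B> \<Longrightarrow> C \<subseteq> \<B>"
  by (induction rule: required.induct) auto

lemma omega_in: assumes "finite B" "B \<noteq> {}" shows "omega i B \<in> B"
proof (cases "i \<le> Min B \<or> Max B < i")
  case True then show ?thesis using assms by (simp add: omega_def)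
next
  case False
  then have "Min B < i" by simp
  then have "Min B \<in> {x \<in> B. x < i}" using assms Min_in by blast
  moreover have "finite {x \<in> B. x < i}" using assms by auto
  ultimately have "Max {x \<in> B. x < i} \<in> {x \<in> B. x < i}" by (intro Max_in) auto
  then show ?thesis using False by (simp add: omega_def)
qed

lemma add1_inj: "a \<in> {1..n} \<Longrightarrow> b \<in> {1..n} \<Longrightarrow> add1_mod n a = add1_mod n b \<Longrightarrow> a = b"
  unfolding add1_mod_def
  by (cases "a < n"; cases "b < n"; simp)

theorem lemma1:
  fixes n t :: nat and \<B> \<B>' :: "nat set set" and i :: nat
  assumes "0 < n" and "0 < t"
    and "is_partition n t \<B>"
    and "\<B>' \<subset> \<B>"
    and "i \<in> \<Union>\<B>'"
  shows "(add1_mod n i, \<B>') \<notin> required n \<B>"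
proof
  assume r: "(add1_mod n i, \<B>') \<in> required n \<B>"
  from assms(3) have ne: "\<forall>B\<in>\<B>. B \<noteq> {}" and dj: "\<forall>B\<in>\<B>. \<forall>C\<in>\<B>. B \<noteq> C \<longrightarrow> B \<inter> C = {}"
    and un: "\<Union>\<B> = {1..n}" unfolding is_partition_def by auto
  from r show False
  proof cases
    case start then show False using assms(4) by simp
  next
    case (step j C B)
    have CB: "C \<subseteq> \<B>" using step req_sub by blast
    have BB: "B \<in> \<B>" using CB step by auto
    have fin: "finite B" using BB un by (metis Sup_upper finite_atLeastAtMost finite_subset)
    have om: "omega j B \<in> B" using omega_in[OF fin] ne BB by auto
    obtain D where D: "D \<in> \<B>'" "i \<in> D" using assms(5) by auto
    have DB: "D \<in> \<B>" "D \<noteq> B" using D assms(4) step by auto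
    have "i \<in> {1..n}" using D DB un by auto
    moreover have "omega j B \<in> {1..n}" using om BB un by auto
    ultimately have "i = omega j B" using add1_inj step(1) by auto
    then show False using dj DB BB D om by blast
  qed
qed

end
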